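(* Let $H=(V,E)$ be a hypergraph with at least $3$ edges and let $L=\mathcal L(H)$ be its intersection graph. (1) If $H$ is eulerian, then $L$ has a Hamilton cycle. (2) If $H$ is quasi-eulerian, then $L$ has a spanning subgraph each of whose connected components is $1$-regular or $2$-regular. (3) If $H$ has an Euler family containing no closed strict trail of length less than $3$, then $L$ has a $2$-factor.
   Context: A hypergraph $H=(V,E)$ consists of a finite nonempty vertex set $V$, a finite edge set $E$ disjoint from $V$, and an incidence function assigning to each edge $e\in E$ a subset of $V$ (also denoted $e$); distinct edges may have the same vertex set. Hypergraphs are assumed to have no empty edges. A walk of length $k$ is a sequence $W=v_0e_1v_1e_2\cdots e_kv_k$ with $v_i\in V$, $e_i\in E$, such that for each $i$, $v_{i-1}\ne v_i$ and $v_{i-1},v_i\in e_i$; the $v_i$ are its anchors. $W$ is closed if $k\ge 2$ and $v_0=v_k$; it is a strict trail if $e_1,\dots,e_k$ are pairwise distinct. An Euler tour of $H$ is a closed strict trail traversing every edge of $H$; an Euler family of $H$ is a family of closed strict trails such that every edge of $H$ lies in exactly one trail and no two trails have a common anchor. $H$ is eulerian (quasi-eulerian) if it has an Euler tour (Euler family). The intersection graph $\mathcal L(H)$ is the simple graph with vertex set $E$ in which distinct $e,e'$ are adjacent iff $e\cap e'\ne\emptyset$. *)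

theory Defs
  imports Main
begin

text \<open>A hypergraph: vertex set V, edge set E (edges of a separate type, hence disjoint
from V), incidence function inc; finite, V nonempty, no empty edges.\<close>
definition hypergraph :: "'v set \<Rightarrow> 'e set \<Rightarrow> ('e \<Rightarrow> 'v set) \<Rightarrow> bool" where
  "hypergraph V E inc \<longleftrightarrow> finite V \<and> V \<noteq> {} \<and> finite E \<and>
     (\<forall>e\<in>E. inc e \<subseteq> V \<and> inc e \<noteq> {})"

text \<open>A walk v0 e1 v1 ... ek vk is represented by the anchor list vs = [v0,...,vk]
and the edge list es = [e1,...,ek]; its length is length es.\<close>
definition hwalk :: "'v set \<Rightarrow> 'e set \<Rightarrow> ('e \<Rightarrow> 'v set) \<Rightarrow> 'v list \<Rightarrow> 'e list \<Rightarrow> bool" where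
  "hwalk V E inc vs es \<longleftrightarrow> length vs = length es + 1 \<and> set vs \<subseteq> V \<and>
     (\<forall>i < length es. es ! i \<in> E \<and> vs ! i \<noteq> vs ! (Suc i) \<and>
        vs ! i \<in> inc (es ! i) \<and> vs ! (Suc i) \<in> inc (es ! i))"

definition closed_strict_trail :: "'v set \<Rightarrow> 'e set \<Rightarrow> ('e \<Rightarrow> 'v set) \<Rightarrow> 'v list \<Rightarrow> 'e list \<Rightarrow> bool" where
  "closed_strict_trail V E inc vs es \<longleftrightarrow> hwalk V E inc vs es \<and> length es \<ge> 2 \<and>
     hd vs = last vs \<and> distinct es"

definition euler_tour :: "'v set \<Rightarrow> 'e set \<Rightarrow> ('e \<Rightarrow> 'v set) \<Rightarrow> 'v list \<Rightarrow> 'e list \<Rightarrow> bool" where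
  "euler_tour V E inc vs es \<longleftrightarrow> closed_strict_trail V E inc vs es \<and> set es = E"

definition eulerian :: "'v set \<Rightarrow> 'e set \<Rightarrow> ('e \<Rightarrow> 'v set) \<Rightarrow> bool" where
  "eulerian V E inc \<longleftrightarrow> (\<exists>vs es. euler_tour V E inc vs es)"

definition euler_family :: "'v set \<Rightarrow> 'e set \<Rightarrow> ('e \<Rightarrow> 'v set) \<Rightarrow> ('v list \<times> 'e list) set \<Rightarrow> bool" where
  "euler_family V E inc F \<longleftrightarrow>
     (\<forall>T\<in>F. closed_strict_trail V E inc (fst T) (snd T)) \<and>
     (\<forall>e\<in>E. \<exists>!T. T \<in> F \<and> e \<in> set (snd T)) \<and>
     (\<forall>T\<in>F. \<forall>T'\<in>F. T \<noteq> T' \<longrightarrow> set (fst T) \<inter> set (fst T') = {})"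

definition quasi_eulerian :: "'v set \<Rightarrow> 'e set \<Rightarrow> ('e \<Rightarrow> 'v set) \<Rightarrow> bool" where
  "quasi_eulerian V E inc \<longleftrightarrow> (\<exists>F. euler_family V E inc F)"

text \<open>Intersection graph: vertex set E, adjacency relation.\<close>
definition inter_adj :: "('e \<Rightarrow> 'v set) \<Rightarrow> 'e \<Rightarrow> 'e \<Rightarrow> bool" where
  "inter_adj inc e e' \<longleftrightarrow> e \<noteq> e' \<and> inc e \<inter> inc e' \<noteq> {}"

text \<open>Simple graphs are given by a vertex set S and a symmetric irreflexive adjacency A.\<close>
definition hamilton_cycle :: "'a set \<Rightarrow> ('a \<Rightarrow> 'a \<Rightarrow> bool) \<Rightarrow> 'a list \<Rightarrow> bool" where
  "hamilton_cycle S A cs \<longleftrightarrow> length cs \<ge> 3 \<and> distinct cs \<and> set cs = S \<and>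
     (\<forall>i. Suc i < length cs \<longrightarrow> A (cs ! i) (cs ! Suc i)) \<and> A (last cs) (hd cs)"

definition spanning_subgraph :: "'a set \<Rightarrow> ('a \<Rightarrow> 'a \<Rightarrow> bool) \<Rightarrow> ('a \<Rightarrow> 'a \<Rightarrow> bool) \<Rightarrow> bool" where
  "spanning_subgraph S A F \<longleftrightarrow>
     (\<forall>x y. F x y \<longrightarrow> x \<in> S \<and> y \<in> S \<and> A x y) \<and> (\<forall>x y. F x y \<longrightarrow> F y x)"

definition deg :: "'a set \<Rightarrow> ('a \<Rightarrow> 'a \<Rightarrow> bool) \<Rightarrow> 'a \<Rightarrow> nat" where
  "deg S F x = card {y \<in> S. F x y}"

definition components_1_or_2_regular :: "'a set \<Rightarrow> ('a \<Rightarrow> 'a \<Rightarrow> bool) \<Rightarrow> bool" where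
  "components_1_or_2_regular S F \<longleftrightarrow>
     (\<forall>x\<in>S. (\<forall>y. F\<^sup>*\<^sup>* x y \<longrightarrow> deg S F y = 1) \<or> (\<forall>y. F\<^sup>*\<^sup>* x y \<longrightarrow> deg S F y = 2))"

definition two_factor :: "'a set \<Rightarrow> ('a \<Rightarrow> 'a \<Rightarrow> bool) \<Rightarrow> ('a \<Rightarrow> 'a \<Rightarrow> bool) \<Rightarrow> bool" where
  "two_factor S A F \<longleftrightarrow> spanning_subgraph S A F \<and> (\<forall>x\<in>S. deg S F x = 2)"

end

theory Submission
  imports Defs
begin

definition nxt :: "nat \<Rightarrow> nat \<Rightarrow> nat" where
  "nxt k i = (if Suc i < k then Suc i else 0)"

definition prv :: "nat \<Rightarrow> nat \<Rightarrow> nat" where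
  "prv k i = (if i = 0 then k - 1 else i - 1)"

definition FF :: "('v list \<times> 'e list) set \<Rightarrow> 'e \<Rightarrow> 'e \<Rightarrow> bool" where
  "FF Fam x y \<longleftrightarrow> (\<exists>T\<in>Fam. \<exists>i<length (snd T).
     (x = snd T ! i \<and> y = snd T ! nxt (length (snd T)) i) \<or>
     (y = snd T ! i \<and> x = snd T ! nxt (length (snd T)) i))"

lemma cst_edges: "closed_strict_trail V E inc vs es \<Longrightarrow> set es \<subseteq> E"
  unfolding closed_strict_trail_def hwalk_def by (auto simp: in_set_conv_nth)

lemma cst_adj:
  assumes "closed_strict_trail V E inc vs es" "i < length es"
  shows "inter_adj inc (es!i) (es!(nxt (length es) i))"
proof -
  let ?k = "length es"
  have w: "hwalk V E inc vs es" and k2: "?k \<ge> 2" and hl: "hd vs = last vs" and d: "distinct es"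
    using assms(1) unfolding closed_strict_trail_def by auto
  have lv: "length vs = ?k + 1" using w unfolding hwalk_def by auto
  have a: "vs ! Suc i \<in> inc (es ! i)" using w assms(2) unfolding hwalk_def by auto
  have nl: "nxt ?k i < ?k" "nxt ?k i \<noteq> i" using assms(2) k2 unfolding nxt_def by auto
  have ne: "es ! i \<noteq> es ! nxt ?k i" using d nl assms(2) by (simp add: nth_eq_iff_index_eq)
  have b: "vs ! Suc i \<in> inc (es ! nxt ?k i)"
  proof (cases "Suc i < ?k")
    case True
    then show ?thesis using w unfolding hwalk_def nxt_def by auto
  next
    case False
    then have "Suc i = ?k" using assms(2) by auto
    have vne: "vs \<noteq> []" using lv by auto
    then have "vs ! Suc i = last vs" using lv \<open>Suc i = ?k\<close> by (simp add: last_conv_nth)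
    also have "\<dots> = vs ! 0" using hl vne by (simp add: hd_conv_nth)
    moreover have "vs ! 0 \<in> inc (es ! 0)"
    proof -
      have "0 < length es" using k2 by linarith
      then show ?thesis using w unfolding hwalk_def by blast
    qed
    ultimately show ?thesis using False unfolding nxt_def by auto
  qed
  show ?thesis unfolding inter_adj_def using a b ne by auto
qed

lemma fam_unique:
  assumes "euler_family V E inc Fam" "T \<in> Fam" "T' \<in> Fam" "e \<in> set (snd T)" "e \<in> set (snd T')"
  shows "T = T'"
proof -
  have "e \<in> E" using assms cst_edges unfolding euler_family_def by blast
  then obtain U where "\<forall>X. (X \<in> Fam \<and> e \<in> set (snd X)) \<longleftrightarrow> X = U"
    using assms(1) unfolding euler_family_def by metis
  then have "T = U" "T' = U" using assms(2-5) by metis+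
  then show ?thesis by simp
qed

lemma idx_set:
  assumes "i < k" "k \<ge> 2"
  shows "{j. j < k \<and> (j = nxt k i \<or> i = nxt k j)} = {nxt k i, prv k i}"
  using assms unfolding nxt_def prv_def by auto

lemma card_idx:
  assumes "i < k" "k \<ge> 2"
  shows "card {nxt k i, prv k i} = (if k = 2 then 1 else 2)"
proof -
  have "k = 2 \<Longrightarrow> nxt k i = prv k i" using assms unfolding nxt_def prv_def by auto
  moreover have "k \<noteq> 2 \<Longrightarrow> nxt k i \<noteq> prv k i" using assms unfolding nxt_def prv_def by auto
  ultimately show ?thesis by auto
qed

lemma FF_same:
  assumes "euler_family V E inc Fam" "T \<in> Fam" "x \<in> set (snd T)" "FF Fam x y"
  shows "\<exists>i<length (snd T). \<exists>j<length (snd T). x = snd T ! i \<and> y = snd T ! j \<and>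
           (j = nxt (length (snd T)) i \<or> i = nxt (length (snd T)) j)"
proof -
  obtain T' i where T': "T' \<in> Fam" "i < length (snd T')"
    "(x = snd T' ! i \<and> y = snd T' ! nxt (length (snd T')) i) \<or>
     (y = snd T' ! i \<and> x = snd T' ! nxt (length (snd T')) i)"
    using assms(4) unfolding FF_def by auto
  have k2: "length (snd T') \<ge> 2" using assms(1) T'(1) unfolding euler_family_def closed_strict_trail_def by auto
  have nl: "nxt (length (snd T')) i < length (snd T')" using T'(2) k2 unfolding nxt_def by auto
  have "x \<in> set (snd T')" using T'(3) T'(2) nl by auto
  then have "T' = T" using fam_unique[OF assms(1) T'(1) assms(2)] assms(3) by auto
  then show ?thesis using T' nl by blast
qed

lemma FF_reach:
  assumes "euler_family V E inc Fam" "T \<in> Fam" "(FF Fam)\<^sup>*\<^sup>* x y" "x \<in> set (snd T)"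
  shows "y \<in> set (snd T)"
  using assms(3,4)
proof (induction rule: rtranclp_induct)
  case base then show ?case by simp
next
  case (step y z)
  then show ?case using FF_same[OF assms(1,2)] by fastforce
qed

lemma FF_deg:
  assumes "euler_family V E inc Fam" "T \<in> Fam" "x \<in> set (snd T)"
  shows "deg E (FF Fam) x = (if length (snd T) = 2 then 1 else 2)"
proof -
  let ?es = "snd T" let ?k = "length (snd T)"
  have cst: "closed_strict_trail V E inc (fst T) ?es" using assms unfolding euler_family_def by auto
  have k2: "?k \<ge> 2" and d: "distinct ?es" using cst unfolding closed_strict_trail_def by auto
  have sub: "set ?es \<subseteq> E" using cst_edges[OF cst] .
  obtain i where i: "i < ?k" "x = ?es ! i" using assms(3) by (auto simp: in_set_conv_nth)
  have "{y \<in> E. FF Fam x y} = (\<lambda>j. ?es ! j) ` {j. j < ?k \<and> (j = nxt ?k i \<or> i = nxt ?k j)}"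
  proof (intro equalityI subsetI)
    fix y assume "y \<in> {y \<in> E. FF Fam x y}"
    then obtain i' j where ij: "i' < ?k" "j < ?k" "x = ?es ! i'" "y = ?es ! j"
      "j = nxt ?k i' \<or> i' = nxt ?k j"
      using FF_same[OF assms] by blast
    have "i' = i" using ij i d by (simp add: nth_eq_iff_index_eq)
    then show "y \<in> (\<lambda>j. ?es ! j) ` {j. j < ?k \<and> (j = nxt ?k i \<or> i = nxt ?k j)}" using ij by auto
  next
    fix y assume "y \<in> (\<lambda>j. ?es ! j) ` {j. j < ?k \<and> (j = nxt ?k i \<or> i = nxt ?k j)}"
    then obtain j where j: "j < ?k" "y = ?es ! j" "j = nxt ?k i \<or> i = nxt ?k j" by auto
    have "y \<in> E" using j sub by auto
    moreover have "FF Fam x y" unfolding FF_def using assms(2) i j by blast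
    ultimately show "y \<in> {y \<in> E. FF Fam x y}" by auto
  qed
  also have "\<dots> = (\<lambda>j. ?es ! j) ` {nxt ?k i, prv ?k i}" using idx_set[OF i(1) k2] by simp
  finally have eq: "{y \<in> E. FF Fam x y} = (\<lambda>j. ?es ! j) ` {nxt ?k i, prv ?k i}" .
  have inj0: "inj_on (\<lambda>j. ?es ! j) {..<?k}" using d by (simp add: inj_on_def nth_eq_iff_index_eq)
  have "{nxt ?k i, prv ?k i} \<subseteq> {..<?k}" using i(1) k2 unfolding nxt_def prv_def by auto
  then have inj: "inj_on (\<lambda>j. ?es ! j) {nxt ?k i, prv ?k i}" using inj_on_subset[OF inj0] by blast
  show ?thesis unfolding deg_def eq card_image[OF inj] using card_idx[OF i(1) k2] .
qed

lemma FF_span: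
  assumes "euler_family V E inc Fam"
  shows "spanning_subgraph E (inter_adj inc) (FF Fam)"
  unfolding spanning_subgraph_def
proof (rule conjI; intro allI impI)
  fix x y assume "FF Fam x y"
  then obtain T i where T: "T \<in> Fam" "i < length (snd T)"
    "(x = snd T ! i \<and> y = snd T ! nxt (length (snd T)) i) \<or>
     (y = snd T ! i \<and> x = snd T ! nxt (length (snd T)) i)"
    unfolding FF_def by auto
  have cst: "closed_strict_trail V E inc (fst T) (snd T)" using assms T unfolding euler_family_def by auto
  have k2: "length (snd T) \<ge> 2" using cst unfolding closed_strict_trail_def by auto
  have nl: "nxt (length (snd T)) i < length (snd T)" using T(2) k2 unfolding nxt_def by auto
  have sub: "set (snd T) \<subseteq> E" using cst_edges[OF cst] .
  have ad: "inter_adj inc (snd T ! i) (snd T ! nxt (length (snd T)) i)" using cst_adj[OF cst T(2)] .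
  show "x \<in> E \<and> y \<in> E \<and> inter_adj inc x y"
    using T(3) sub T(2) nl ad by (auto simp: inter_adj_def)
next
  fix x y assume "FF Fam x y" then show "FF Fam y x" unfolding FF_def by blast
qed

theorem theorem2p12:
  fixes V :: "'v set" and E :: "'e set" and inc :: "'e \<Rightarrow> 'v set"
  assumes "hypergraph V E inc" and "card E \<ge> 3"
  shows "(eulerian V E inc \<longrightarrow> (\<exists>cs. hamilton_cycle E (inter_adj inc) cs))
    \<and> (quasi_eulerian V E inc \<longrightarrow>
        (\<exists>F. spanning_subgraph E (inter_adj inc) F \<and> components_1_or_2_regular E F))
    \<and> ((\<exists>Fam. euler_family V E inc Fam \<and> (\<forall>T\<in>Fam. length (snd T) \<ge> 3)) \<longrightarrow>
        (\<exists>F. two_factor E (inter_adj inc) F))"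
proof (intro conjI impI)
  assume "eulerian V E inc"
  then obtain vs es where et: "euler_tour V E inc vs es" unfolding eulerian_def by auto
  have cst: "closed_strict_trail V E inc vs es" and se: "set es = E" using et unfolding euler_tour_def by auto
  have d: "distinct es" using cst unfolding closed_strict_trail_def by auto
  have len: "length es \<ge> 3" using assms(2) se d distinct_card by metis
  have "hamilton_cycle E (inter_adj inc) es"
    unfolding hamilton_cycle_def
  proof (intro conjI allI impI)
    fix i assume i: "Suc i < length es"
    show "inter_adj inc (es ! i) (es ! Suc i)"
      using cst_adj[OF cst, of i] i unfolding nxt_def by auto
  next
    have "inter_adj inc (es ! (length es - 1)) (es ! nxt (length es) (length es - 1))"
      using cst_adj[OF cst, of "length es - 1"] len by auto
    moreover have "nxt (length es) (length es - 1) = 0" unfolding nxt_def using len by auto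
    moreover have "es \<noteq> []" using len by auto
    ultimately show "inter_adj inc (last es) (hd es)"
      by (simp add: last_conv_nth hd_conv_nth)
  qed (use len d se in auto)
  then show "\<exists>cs. hamilton_cycle E (inter_adj inc) cs" by blast
next
  assume "quasi_eulerian V E inc"
  then obtain Fam where ef: "euler_family V E inc Fam" unfolding quasi_eulerian_def by auto
  have "components_1_or_2_regular E (FF Fam)"
    unfolding components_1_or_2_regular_def
  proof
    fix x assume "x \<in> E"
    then obtain T where T: "T \<in> Fam" "x \<in> set (snd T)" using ef unfolding euler_family_def by blast
    have "\<forall>y. (FF Fam)\<^sup>*\<^sup>* x y \<longrightarrow> deg E (FF Fam) y = (if length (snd T) = 2 then 1 else 2)"
      using FF_reach[OF ef T(1) _ T(2)] FF_deg[OF ef T(1)] by blast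
    then show "(\<forall>y. (FF Fam)\<^sup>*\<^sup>* x y \<longrightarrow> deg E (FF Fam) y = 1) \<or>
               (\<forall>y. (FF Fam)\<^sup>*\<^sup>* x y \<longrightarrow> deg E (FF Fam) y = 2)"
      by (cases "length (snd T) = 2") auto
  qed
  then show "\<exists>F. spanning_subgraph E (inter_adj inc) F \<and> components_1_or_2_regular E F"
    using FF_span[OF ef] by blast
next
  assume "\<exists>Fam. euler_family V E inc Fam \<and> (\<forall>T\<in>Fam. length (snd T) \<ge> 3)"
  then obtain Fam where ef: "euler_family V E inc Fam" and l3: "\<forall>T\<in>Fam. length (snd T) \<ge> 3" by blast
  have "\<forall>x\<in>E. deg E (FF Fam) x = 2"
  proof
    fix x assume "x \<in> E"
    then obtain T where T: "T \<in> Fam" "x \<in> set (snd T)" using ef unfolding euler_family_def by blast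
    show "deg E (FF Fam) x = 2" using FF_deg[OF ef T] l3 T(1) by auto
  qed
  then show "\<exists>F. two_factor E (inter_adj inc) F"
    using FF_span[OF ef] unfolding two_factor_def by blast
qed

end
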